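(* Let $X$ be a regular totally Lindelöf space and $\mathcal{F}$ a filter base on $X$ stable under countable intersections. Then there is a compact set $K\subseteq X$ such that $\mathcal{F}\vee G_\delta(K):=\{F_0\cap F_1: F_0,F_1\in\mathcal{F}\cup G_\delta(K)\}$ is a total filter base stable under countable intersections that extends $\mathcal{F}$.
   Context: A filter base on $X$ is a nonempty $\mathcal{F}\subseteq\mathcal{P}(X)$ with $\emptyset\notin\mathcal{F}$ and closed under pairwise intersections; it is stable under countable intersections if for every countable $S\subseteq\mathcal{F}$ there is $H\in\mathcal{F}$ with $H\subseteq\bigcap S$. $G_\delta(K)=\{G\subseteq X: K\subseteq G,\ G\text{ is a countable intersection of open subsets of }X\}$. $ad(\mathcal{F})=\bigcap\{\overline{F}:F\in\mathcal{F}\}$; $\mathcal{F}$ is total if every filter base $\mathcal{H}\supseteq\mathcal{F}$ satisfies $ad(\mathcal{H})\neq\emptyset$. $X$ is totally Lindelöf if every filter base on $X$ stable under countable intersections is contained in a total filter base on $X$ stable under countable intersections. *)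

theory Defs
  imports "HOL-Analysis.Analysis"
begin

definition filter_base :: "'a topology \<Rightarrow> 'a set set \<Rightarrow> bool" where
  "filter_base X \<F> \<longleftrightarrow> \<F> \<noteq> {} \<and> \<F> \<subseteq> Pow (topspace X) \<and> {} \<notin> \<F> \<and>
     (\<forall>A\<in>\<F>. \<forall>B\<in>\<F>. A \<inter> B \<in> \<F>)"

definition countably_stable :: "'a set set \<Rightarrow> bool" where
  "countably_stable \<F> \<longleftrightarrow> (\<forall>S. S \<subseteq> \<F> \<and> countable S \<longrightarrow> (\<exists>H\<in>\<F>. H \<subseteq> \<Inter>S))"

definition Gdelta_of :: "'a topology \<Rightarrow> 'a set \<Rightarrow> 'a set set" where
  "Gdelta_of X K = {G. K \<subseteq> G \<and>
     (\<exists>\<U>. countable \<U> \<and> (\<forall>U\<in>\<U>. openin X U) \<and> G = topspace X \<inter> \<Inter>\<U>)}"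

definition adherence :: "'a topology \<Rightarrow> 'a set set \<Rightarrow> 'a set" where
  "adherence X \<F> = topspace X \<inter> \<Inter>{X closure_of F | F. F \<in> \<F>}"

definition total_fb :: "'a topology \<Rightarrow> 'a set set \<Rightarrow> bool" where
  "total_fb X \<F> \<longleftrightarrow> (\<forall>\<H>. filter_base X \<H> \<and> \<F> \<subseteq> \<H> \<longrightarrow> adherence X \<H> \<noteq> {})"

definition totally_lindelof :: "'a topology \<Rightarrow> bool" where
  "totally_lindelof X \<longleftrightarrow> (\<forall>\<F>. filter_base X \<F> \<and> countably_stable \<F> \<longrightarrow>
     (\<exists>\<H>. \<F> \<subseteq> \<H> \<and> filter_base X \<H> \<and> countably_stable \<H> \<and> total_fb X \<H>))"

definition fb_join :: "'a set set \<Rightarrow> 'a set set \<Rightarrow> 'a set set" where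
  "fb_join \<F> \<G> = {A \<inter> B | A B. A \<in> \<F> \<union> \<G> \<and> B \<in> \<F> \<union> \<G>}"

end

theory Submission
  imports Defs
begin

lemma fb_finite_Inter:
  assumes "filter_base X H" "finite S" "S \<subseteq> H"
  shows "\<exists>h\<in>H. h \<subseteq> \<Inter>S"
  using assms(2,3)
proof (induction S rule: finite_induct)
  case empty
  then show ?case using assms(1) unfolding filter_base_def by auto
next
  case (insert x S)
  then obtain h where "h \<in> H" "h \<subseteq> \<Inter>S" by auto
  moreover have "x \<in> H" using insert by auto
  ultimately show ?case using assms(1) unfolding filter_base_def
    by (rule_tac x="x \<inter> h" in bexI) auto
qed

lemma adherence_mono:
  "A \<subseteq> B \<Longrightarrow> adherence X B \<subseteq> adherence X A"
  unfolding adherence_def by blast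

lemma total_avoid:
  assumes fb: "filter_base X H" and tot: "total_fb X H"
    and op: "\<forall>V\<in>\<V>. openin X V"
    and nc: "\<forall>h\<in>H. \<forall>\<W>. finite \<W> \<and> \<W> \<subseteq> \<V> \<longrightarrow> \<not> h \<subseteq> \<Union>\<W>"
  shows "\<exists>x\<in>adherence X H. x \<notin> \<Union>\<V>"
proof -
  define H' where "H' = H \<union> {h - \<Union>\<W> | h \<W>. h\<in>H \<and> finite \<W> \<and> \<W> \<subseteq> \<V>}"
  have HH': "H \<subseteq> H'" unfolding H'_def by auto
  have fbH: "H \<noteq> {}" "H \<subseteq> Pow (topspace X)" "{} \<notin> H" "\<forall>A\<in>H. \<forall>B\<in>H. A \<inter> B \<in> H"
    using fb unfolding filter_base_def by auto
  have int: "A \<inter> B \<in> H'" if "A \<in> H'" "B \<in> H'" for A B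
  proof -
    have form: "\<exists>h W. C = h - \<Union>W \<and> h \<in> H \<and> finite W \<and> W \<subseteq> \<V>" if "C \<in> H'" for C
    proof (cases "C \<in> H")
      case True then show ?thesis by (rule_tac x=C in exI, rule_tac x="{}" in exI) auto
    next
      case False then show ?thesis using that unfolding H'_def by blast
    qed
    from form[OF that(1)] form[OF that(2)] obtain h1 W1 h2 W2 where a: "A = h1 - \<Union>W1" "h1 \<in> H" "finite W1" "W1 \<subseteq> \<V>"
      and b: "B = h2 - \<Union>W2" "h2 \<in> H" "finite W2" "W2 \<subseteq> \<V>"
      by blast
    have "A \<inter> B = (h1 \<inter> h2) - \<Union>(W1 \<union> W2)" using a b by auto
    moreover have "h1 \<inter> h2 \<in> H" using fbH a b by auto
    moreover have "(h1 \<inter> h2) - \<Union>(W1 \<union> W2) \<in> {h - \<Union>\<W> | h \<W>. h\<in>H \<and> finite \<W> \<and> \<W> \<subseteq> \<V>}"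
      apply (rule CollectI, rule exI[where x="h1 \<inter> h2"], rule exI[where x="W1 \<union> W2"])
      using a b \<open>h1 \<inter> h2 \<in> H\<close> by simp
    ultimately show ?thesis unfolding H'_def by simp
  qed
  have "filter_base X H'"
    unfolding filter_base_def
  proof (intro conjI ballI)
    show "H' \<noteq> {}" using fbH HH' by auto
    show "H' \<subseteq> Pow (topspace X)" using fbH unfolding H'_def by auto
    show "{} \<notin> H'"
    proof
      assume "{} \<in> H'"
      then obtain h W where "h \<in> H" "finite W" "W \<subseteq> \<V>" "h - \<Union>W = {}"
        unfolding H'_def using fbH by auto
      then show False using nc by blast
    qed
  qed (rule int)
  then have "adherence X H' \<noteq> {}" using tot HH' unfolding total_fb_def by blast
  then obtain x where x: "x \<in> adherence X H'" by auto
  have "x \<in> adherence X H" using x adherence_mono[OF HH'] by auto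
  moreover have "x \<notin> V" if V: "V \<in> \<V>" for V
  proof -
    obtain h where h: "h \<in> H" using fbH by auto
    have "h - \<Union>{V} \<in> H'" unfolding H'_def using h V by blast
    then have "x \<in> X closure_of (h - V)" using x unfolding adherence_def by auto
    also have "\<dots> \<subseteq> X closure_of (topspace X - V)"
      by (rule closure_of_mono) (use h fbH in auto)
    also have "\<dots> = topspace X - V"
      using op V by (simp add: closure_of_closedin closedin_diff)
    finally show ?thesis by auto
  qed
  ultimately show ?thesis by blast
qed

lemma Gdelta_top: "K \<subseteq> topspace X \<Longrightarrow> topspace X \<in> Gdelta_of X K"
  unfolding Gdelta_of_def by (rule CollectI, simp, rule exI[where x="{}"]) simp

lemma Gdelta_sub: "G \<in> Gdelta_of X K \<Longrightarrow> G \<subseteq> topspace X \<and> K \<subseteq> G"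
  unfolding Gdelta_of_def by auto

lemma Gdelta_countable_Inter:
  assumes "S \<subseteq> Gdelta_of X K" "countable S" "K \<subseteq> topspace X"
  shows "topspace X \<inter> \<Inter>S \<in> Gdelta_of X K"
proof -
  have "\<forall>G\<in>S. \<exists>\<U>. countable \<U> \<and> (\<forall>U\<in>\<U>. openin X U) \<and> G = topspace X \<inter> \<Inter>\<U>"
    using assms(1) unfolding Gdelta_of_def by auto
  then obtain u where u: "\<forall>G\<in>S. countable (u G) \<and> (\<forall>U\<in>u G. openin X U) \<and> G = topspace X \<inter> \<Inter>(u G)"
    by metis
  define \<U> where "\<U> = \<Union>(u ` S)"
  have "countable \<U>" unfolding \<U>_def using u assms(2) by (intro countable_UN) auto
  moreover have "\<forall>U\<in>\<U>. openin X U" unfolding \<U>_def using u by auto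
  moreover have "topspace X \<inter> \<Inter>S = topspace X \<inter> \<Inter>\<U>"
  proof
    show "topspace X \<inter> \<Inter>S \<subseteq> topspace X \<inter> \<Inter>\<U>"
    proof
      fix x assume x: "x \<in> topspace X \<inter> \<Inter>S"
      have "x \<in> U" if "U \<in> \<U>" for U
      proof -
        from that obtain G where "G \<in> S" "U \<in> u G" unfolding \<U>_def by auto
        then show ?thesis using x u by blast
      qed
      then show "x \<in> topspace X \<inter> \<Inter>\<U>" using x by auto
    qed
    show "topspace X \<inter> \<Inter>\<U> \<subseteq> topspace X \<inter> \<Inter>S"
    proof
      fix x assume x: "x \<in> topspace X \<inter> \<Inter>\<U>"
      have "x \<in> G" if "G \<in> S" for G
      proof -
        have "x \<in> \<Inter>(u G)" using x that unfolding \<U>_def by auto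
        moreover have "G = topspace X \<inter> \<Inter>(u G)" using u that by blast
        ultimately show ?thesis using x by blast
      qed
      then show "x \<in> topspace X \<inter> \<Inter>S" using x by auto
    qed
  qed
  moreover have "K \<subseteq> topspace X \<inter> \<Inter>S" using assms Gdelta_sub by blast
  ultimately show ?thesis unfolding Gdelta_of_def by blast
qed

lemma Gdelta_Int:
  assumes "G1 \<in> Gdelta_of X K" "G2 \<in> Gdelta_of X K" "K \<subseteq> topspace X"
  shows "G1 \<inter> G2 \<in> Gdelta_of X K"
proof -
  have "topspace X \<inter> \<Inter>{G1, G2} \<in> Gdelta_of X K"
    by (rule Gdelta_countable_Inter) (use assms in auto)
  moreover have "topspace X \<inter> \<Inter>{G1, G2} = G1 \<inter> G2" using Gdelta_sub assms by blast
  ultimately show ?thesis by simp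
qed

lemma fb_join_char:
  assumes "\<F> \<subseteq> Pow (topspace X)" "\<forall>A\<in>\<F>. \<forall>B\<in>\<F>. A \<inter> B \<in> \<F>" "K \<subseteq> topspace X"
  shows "fb_join \<F> (Gdelta_of X K) = {A \<inter> B | A B. A \<in> insert (topspace X) \<F> \<and> B \<in> Gdelta_of X K}"
proof
  let ?G = "Gdelta_of X K" and ?T = "topspace X"
  have T: "?T \<in> ?G" using Gdelta_top assms by blast
  show "fb_join \<F> ?G \<subseteq> {A \<inter> B | A B. A \<in> insert ?T \<F> \<and> B \<in> ?G}"
  proof
    fix S assume "S \<in> fb_join \<F> ?G"
    then obtain A B where S: "S = A \<inter> B" "A \<in> \<F> \<union> ?G" "B \<in> \<F> \<union> ?G" unfolding fb_join_def by auto
    show "S \<in> {A \<inter> B | A B. A \<in> insert ?T \<F> \<and> B \<in> ?G}"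
    proof (cases "A \<in> \<F>")
      case A: True
      show ?thesis
      proof (cases "B \<in> \<F>")
        case True
        then have "S = (A \<inter> B) \<inter> ?T" "A \<inter> B \<in> \<F>" using A S assms by auto
        then show ?thesis using T by blast
      next
        case False then show ?thesis using A S by blast
      qed
    next
      case A: False
      then have AG: "A \<in> ?G" using S by auto
      show ?thesis
      proof (cases "B \<in> \<F>")
        case True
        then have "S = B \<inter> A" using S by auto
        then show ?thesis using True AG by blast
      next
        case False
        then have BG: "B \<in> ?G" using S by auto
        have "A \<inter> B \<in> ?G" using Gdelta_Int[OF AG BG assms(3)] .
        moreover have "S = ?T \<inter> (A \<inter> B)" using S Gdelta_sub[OF AG] by auto
        ultimately show ?thesis by blast
      qed
    qed
  qed
  show "{A \<inter> B | A B. A \<in> insert ?T \<F> \<and> B \<in> ?G} \<subseteq> fb_join \<F> ?G"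
  proof
    fix S assume "S \<in> {A \<inter> B | A B. A \<in> insert ?T \<F> \<and> B \<in> ?G}"
    then obtain A B where S: "S = A \<inter> B" "A \<in> insert ?T \<F>" "B \<in> ?G" by auto
    show "S \<in> fb_join \<F> ?G"
    proof (cases "A = ?T")
      case True
      then have "S = B \<inter> B" using S Gdelta_sub by blast
      then show ?thesis unfolding fb_join_def using S by blast
    next
      case False then show ?thesis unfolding fb_join_def using S by blast
    qed
  qed
qed


theorem proposition2p4:
  fixes X :: "'a topology" and \<F> :: "'a set set"
  assumes "regular_space X" and "totally_lindelof X"
    and "filter_base X \<F>" and "countably_stable \<F>"
  shows "\<exists>K. compactin X K \<and>
           filter_base X (fb_join \<F> (Gdelta_of X K)) \<and>
           countably_stable (fb_join \<F> (Gdelta_of X K)) \<and>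
           total_fb X (fb_join \<F> (Gdelta_of X K)) \<and>
           \<F> \<subseteq> fb_join \<F> (Gdelta_of X K)"
proof -
  let ?T = "topspace X"
  obtain H where FH: "\<F> \<subseteq> H" and fbH: "filter_base X H" and stH: "countably_stable H"
    and totH: "total_fb X H"
    using assms(2-4) unfolding totally_lindelof_def by blast
  have fbH': "H \<noteq> {}" "H \<subseteq> Pow ?T" "{} \<notin> H" "\<forall>A\<in>H. \<forall>B\<in>H. A \<inter> B \<in> H"
    using fbH unfolding filter_base_def by auto
  have fbF: "\<F> \<noteq> {}" "\<F> \<subseteq> Pow ?T" "{} \<notin> \<F>" "\<forall>A\<in>\<F>. \<forall>B\<in>\<F>. A \<inter> B \<in> \<F>"
    using assms(3) unfolding filter_base_def by auto
  define K where "K = adherence X H"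
  have KT: "K \<subseteq> ?T" unfolding K_def adherence_def by auto
  have Kcl: "K \<subseteq> X closure_of h" if "h \<in> H" for h
    using that unfolding K_def adherence_def by auto
  have nbhd: "\<exists>h\<in>H. h \<subseteq> U" if U: "openin X U" "K \<subseteq> U" for U
  proof (rule ccontr)
    assume no: "\<not> (\<exists>h\<in>H. h \<subseteq> U)"
    have "\<forall>h\<in>H. \<forall>\<W>. finite \<W> \<and> \<W> \<subseteq> {U} \<longrightarrow> \<not> h \<subseteq> \<Union>\<W>"
    proof (intro ballI allI impI)
      fix h \<W> assume h: "h \<in> H" and W: "finite \<W> \<and> \<W> \<subseteq> {U}"
      then have "\<W> = {} \<or> \<W> = {U}" by auto
      then show "\<not> h \<subseteq> \<Union>\<W>" using h no fbH' by auto
    qed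
    then obtain x where "x \<in> adherence X H" "x \<notin> \<Union>{U}"
      using total_avoid[OF fbH totH, of "{U}"] U by auto
    then show False using U unfolding K_def by auto
  qed
  have Kcomp: "compactin X K"
    unfolding compactin_def
  proof (intro conjI allI impI)
    show "K \<subseteq> ?T" by (rule KT)
    fix \<U> assume U: "(\<forall>U\<in>\<U>. openin X U) \<and> K \<subseteq> \<Union>\<U>"
    show "\<exists>\<F>. finite \<F> \<and> \<F> \<subseteq> \<U> \<and> K \<subseteq> \<Union>\<F>"
    proof (rule ccontr)
      assume nofin: "\<not> (\<exists>\<F>. finite \<F> \<and> \<F> \<subseteq> \<U> \<and> K \<subseteq> \<Union>\<F>)"
      define \<W> where "\<W> = {W. openin X W \<and> (\<exists>U\<in>\<U>. X closure_of W \<subseteq> U)}"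
      have Wop: "\<forall>W\<in>\<W>. openin X W" unfolding \<W>_def by auto
      have KW: "K \<subseteq> \<Union>\<W>"
      proof
        fix x assume x: "x \<in> K"
        then obtain U where Uu: "U \<in> \<U>" "x \<in> U" using U by auto
        have "closedin X (?T - U)" using U Uu by auto
        moreover have "x \<in> ?T - (?T - U)" using x KT Uu by auto
        ultimately obtain W where W: "openin X W" "x \<in> W" "disjnt (?T - U) (X closure_of W)"
          using assms(1) unfolding regular_space by blast
        have "X closure_of W \<subseteq> U" using W(3) closure_of_subset_topspace[of X W]
          unfolding disjnt_def by blast
        then have "W \<in> \<W>" unfolding \<W>_def using W Uu by auto
        then show "x \<in> \<Union>\<W>" using W by auto
      qed
      have "\<forall>h\<in>H. \<forall>V. finite V \<and> V \<subseteq> \<W> \<longrightarrow> \<not> h \<subseteq> \<Union>V"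
      proof (intro ballI allI impI notI)
        fix h V assume h: "h \<in> H" and V: "finite V \<and> V \<subseteq> \<W>" and hV: "h \<subseteq> \<Union>V"
        have "\<forall>W\<in>V. \<exists>U. U \<in> \<U> \<and> X closure_of W \<subseteq> U" using V unfolding \<W>_def by auto
        then obtain g where g: "\<forall>W\<in>V. g W \<in> \<U> \<and> X closure_of W \<subseteq> g W" by metis
        have "K \<subseteq> X closure_of h" using Kcl h .
        also have "\<dots> \<subseteq> X closure_of (\<Union>V)" using hV by (rule closure_of_mono)
        also have "\<dots> = (\<Union>W\<in>V. X closure_of W)" using V closure_of_Union by blast
        also have "\<dots> \<subseteq> \<Union>(g ` V)" using g by blast
        finally have "K \<subseteq> \<Union>(g ` V)" .
        moreover have "finite (g ` V)" "g ` V \<subseteq> \<U>" using V g by auto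
        ultimately show False using nofin by blast
      qed
      then obtain x where "x \<in> adherence X H" "x \<notin> \<Union>\<W>"
        using total_avoid[OF fbH totH Wop] by blast
      then show False using KW unfolding K_def by blast
    qed
  qed
  let ?G = "Gdelta_of X K"
  let ?J = "fb_join \<F> ?G"
  have GinH: "\<exists>h\<in>H. h \<subseteq> G" if G: "G \<in> ?G" for G
  proof -
    obtain \<U> where U: "countable \<U>" "\<forall>U\<in>\<U>. openin X U" "G = ?T \<inter> \<Inter>\<U>" "K \<subseteq> G"
      using G unfolding Gdelta_of_def by auto
    have "\<forall>U\<in>\<U>. \<exists>h. h \<in> H \<and> h \<subseteq> U" using U nbhd by blast
    then obtain c where c: "\<forall>U\<in>\<U>. c U \<in> H \<and> c U \<subseteq> U" by metis
    have "c ` \<U> \<subseteq> H" "countable (c ` \<U>)" using c U by auto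
    then obtain h where h: "h \<in> H" "h \<subseteq> \<Inter>(c ` \<U>)" using stH unfolding countably_stable_def by blast
    have "h \<subseteq> ?T" using h fbH' by auto
    then have "h \<subseteq> G" using h c U by blast
    then show ?thesis using h by blast
  qed
  have Jc: "?J = {A \<inter> B | A B. A \<in> insert ?T \<F> \<and> B \<in> ?G}"
    by (rule fb_join_char) (use fbF KT in auto)
  have JcI: "A \<inter> B \<in> ?J" if "A \<in> insert ?T \<F>" "B \<in> ?G" for A B
    unfolding Jc using that by blast
  have JcE: "\<exists>A B. S = A \<inter> B \<and> A \<in> insert ?T \<F> \<and> B \<in> ?G" if "S \<in> ?J" for S
    using that unfolding Jc by blast
  have TG: "?T \<in> ?G" using Gdelta_top KT by blast
  have FJ: "\<F> \<subseteq> ?J" unfolding fb_join_def by blast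
  have GJ: "?G \<subseteq> ?J" unfolding fb_join_def by blast
  have fbJ: "filter_base X ?J"
    unfolding filter_base_def
  proof (intro conjI ballI)
    show "?J \<noteq> {}" using FJ fbF(1) by blast
    show "?J \<subseteq> Pow ?T"
    proof
      fix S assume "S \<in> ?J"
      then obtain A B where "S = A \<inter> B" "A \<in> insert ?T \<F>" "B \<in> ?G" using JcE by blast
      moreover have "A \<subseteq> ?T" using \<open>A \<in> insert ?T \<F>\<close> fbF(2) by blast
      ultimately show "S \<in> Pow ?T" by blast
    qed
    show "{} \<notin> ?J"
    proof
      assume "{} \<in> ?J"
      have "\<exists>A B. {} = A \<inter> B \<and> A \<in> insert ?T \<F> \<and> B \<in> ?G" using JcE[OF \<open>{} \<in> ?J\<close>] .
      then obtain A B where AB: "A \<inter> B = {}" "A \<in> insert ?T \<F>" "B \<in> ?G" by metis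
      obtain h2 where h2: "h2 \<in> H" "h2 \<subseteq> B" using GinH[OF AB(3)] by blast
      obtain h1 where h1: "h1 \<in> H" "h1 \<subseteq> A"
      proof (cases "A = ?T")
        case True
        have "h2 \<subseteq> ?T" using h2(1) fbH'(2) by blast
        then show ?thesis using that[OF h2(1)] True by simp
      next
        case False
        then have "A \<in> H" using AB(2) FH by blast
        then show ?thesis using that by blast
      qed
      have "h1 \<inter> h2 \<in> H" using h1(1) h2(1) fbH'(4) by blast
      moreover have "h1 \<inter> h2 = {}" using h1 h2 AB by blast
      ultimately show False using fbH'(3) by simp
    qed
    fix S1 S2 assume S: "S1 \<in> ?J" "S2 \<in> ?J"
    then obtain A1 B1 A2 B2 where a: "S1 = A1 \<inter> B1" "A1 \<in> insert ?T \<F>" "B1 \<in> ?G"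
      and b: "S2 = A2 \<inter> B2" "A2 \<in> insert ?T \<F>" "B2 \<in> ?G" using JcE[OF S(1)] JcE[OF S(2)] by blast
    have "A1 \<inter> A2 \<in> insert ?T \<F>"
    proof (cases "A1 = ?T")
      case True then show ?thesis using a(2) b(2) fbF(2) by (auto simp: Int_absorb1)
    next
      case False
      then have "A1 \<in> \<F>" using a(2) by blast
      show ?thesis
      proof (cases "A2 = ?T")
        case True then show ?thesis using \<open>A1 \<in> \<F>\<close> fbF(2) by (auto simp: Int_absorb2)
      next
        case False then show ?thesis using \<open>A1 \<in> \<F>\<close> b(2) fbF(4) by blast
      qed
    qed
    moreover have "B1 \<inter> B2 \<in> ?G" using Gdelta_Int a b KT by blast
    moreover have "S1 \<inter> S2 = (A1 \<inter> A2) \<inter> (B1 \<inter> B2)" using a b by auto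
    ultimately show "S1 \<inter> S2 \<in> ?J" using JcI[of "A1 \<inter> A2" "B1 \<inter> B2"] by simp
  qed
  have stJ: "countably_stable ?J"
    unfolding countably_stable_def
  proof (intro allI impI)
    fix S assume S: "S \<subseteq> ?J \<and> countable S"
    have "\<forall>s\<in>S. \<exists>p. fst p \<inter> snd p = s \<and> fst p \<in> insert ?T \<F> \<and> snd p \<in> ?G"
    proof
      fix s assume "s \<in> S"
      then have "s \<in> ?J" using S by blast
      then obtain A B where "s = A \<inter> B" "A \<in> insert ?T \<F>" "B \<in> ?G" using JcE by blast
      then show "\<exists>p. fst p \<inter> snd p = s \<and> fst p \<in> insert ?T \<F> \<and> snd p \<in> ?G"
        by (rule_tac x="(A, B)" in exI) simp
    qed
    from bchoice[OF this] obtain p where p0: "\<forall>s\<in>S. fst (p s) \<inter> snd (p s) = s \<and> fst (p s) \<in> insert ?T \<F> \<and> snd (p s) \<in> ?G"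
      ..
    have p1: "fst (p s) \<inter> snd (p s) = s \<and> fst (p s) \<in> insert ?T \<F> \<and> snd (p s) \<in> ?G"
      if "s \<in> S" for s using p0 that by (rule bspec)
    have pA: "fst (p s) \<in> insert ?T \<F>" if "s \<in> S" for s using p1[OF that] by (elim conjE)
    have pB: "snd (p s) \<in> ?G" if "s \<in> S" for s using p1[OF that] by (elim conjE)
    have pE: "fst (p s) \<inter> snd (p s) = s" if "s \<in> S" for s using p1[OF that] by (elim conjE)
    have sA: "(fst \<circ> p) ` S \<inter> \<F> \<subseteq> \<F>" by (rule Int_lower2)
    have cS: "countable S" using S by (rule conjunct2)
    have cA: "countable ((fst \<circ> p) ` S \<inter> \<F>)"
      by (rule countable_Int1, rule countable_image, rule cS)
    have "\<exists>H\<in>\<F>. H \<subseteq> \<Inter>((fst \<circ> p) ` S \<inter> \<F>)"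
      using assms(4)[unfolded countably_stable_def, rule_format, OF conjI[OF sA cA]] .
    then obtain A0 where A0: "A0 \<in> \<F>" "A0 \<subseteq> \<Inter>((fst \<circ> p) ` S \<inter> \<F>)" ..
    define B0 where "B0 = ?T \<inter> \<Inter>((snd \<circ> p) ` S)"
    have B0: "B0 \<in> ?G" unfolding B0_def
    proof (rule Gdelta_countable_Inter)
      show "(snd \<circ> p) ` S \<subseteq> ?G" using pB by auto
      show "countable ((snd \<circ> p) ` S)" using S by auto
    qed (rule KT)
    have "A0 \<inter> B0 \<in> ?J" using JcI A0 B0 by blast
    moreover have "A0 \<inter> B0 \<subseteq> \<Inter>S"
    proof
      fix x assume x: "x \<in> A0 \<inter> B0"
      have "x \<in> s" if s: "s \<in> S" for s
      proof -
        have "x \<in> fst (p s)"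
        proof (cases "fst (p s) = ?T")
          case True then show ?thesis using x A0 fbF by auto
        next
          case False then have "fst (p s) \<in> \<F>" using pA s by auto
          then show ?thesis using x A0 s by auto
        qed
        moreover have "x \<in> snd (p s)" using x s unfolding B0_def by auto
        ultimately show ?thesis using pE[OF s] by blast
      qed
      then show "x \<in> \<Inter>S" by auto
    qed
    ultimately show "\<exists>H\<in>?J. H \<subseteq> \<Inter>S" by blast
  qed
  have totJ: "total_fb X ?J"
    unfolding total_fb_def
  proof (intro allI impI notI)
    fix H' assume H': "filter_base X H' \<and> ?J \<subseteq> H'" and ad: "adherence X H' = {}"
    have fbH'': "H' \<noteq> {}" "H' \<subseteq> Pow ?T" "{} \<notin> H'" "\<forall>A\<in>H'. \<forall>B\<in>H'. A \<inter> B \<in> H'"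
      using H' unfolding filter_base_def by auto
    define \<C> where "\<C> = {?T - X closure_of h | h. h \<in> H'}"
    have Cop: "\<forall>C\<in>\<C>. openin X C" unfolding \<C>_def by auto
    have KC: "K \<subseteq> \<Union>\<C>"
    proof
      fix x assume x: "x \<in> K"
      then have "x \<notin> adherence X H'" using ad by auto
      then obtain h where "h \<in> H'" "x \<notin> X closure_of h" using x KT unfolding adherence_def by auto
      then show "x \<in> \<Union>\<C>" unfolding \<C>_def using x KT by blast
    qed
    obtain \<C>0 where C0: "finite \<C>0" "\<C>0 \<subseteq> \<C>" "K \<subseteq> \<Union>\<C>0"
    proof -
      have cc: "\<forall>\<U>. (\<forall>U \<in> \<U>. openin X U) \<and> K \<subseteq> \<Union>\<U> \<longrightarrow> (\<exists>\<F>. finite \<F> \<and> \<F> \<subseteq> \<U> \<and> K \<subseteq> \<Union>\<F>)"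
        using Kcomp unfolding compactin_def by blast
      have "\<exists>\<F>. finite \<F> \<and> \<F> \<subseteq> \<C> \<and> K \<subseteq> \<Union>\<F>"
        using cc Cop KC by blast
      then show ?thesis using that by blast
    qed
    have "\<forall>C\<in>\<C>0. \<exists>h. h \<in> H' \<and> C = ?T - X closure_of h" using C0 unfolding \<C>_def by blast
    then obtain hc where hc: "\<forall>C\<in>\<C>0. hc C \<in> H' \<and> ?T - X closure_of (hc C) = C" by metis
    have fbX: "filter_base X H'" using H' by blast
    have "hc ` \<C>0 \<subseteq> H'" using hc by blast
    moreover have "finite (hc ` \<C>0)" using C0 by blast
    ultimately obtain h where h: "h \<in> H'" "h \<subseteq> \<Inter>(hc ` \<C>0)"
      using fb_finite_Inter[OF fbX] by blast
    define V where "V = \<Union>\<C>0"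
    have Vop: "openin X V" unfolding V_def using C0 Cop by blast
    have VT: "V \<subseteq> ?T" using openin_subset[OF Vop] .
    have KV: "K \<subseteq> V" using C0 unfolding V_def by blast
    have "V \<in> ?G" unfolding Gdelta_of_def
    proof (rule CollectI, rule conjI)
      show "K \<subseteq> V" by (rule KV)
      show "\<exists>\<U>. countable \<U> \<and> (\<forall>U\<in>\<U>. openin X U) \<and> V = ?T \<inter> \<Inter>\<U>"
        by (rule exI[where x="{V}"]) (use Vop VT in auto)
    qed
    then have "V \<in> H'" using GJ H' by blast
    then have "h \<inter> V \<in> H'" using h fbH'' by blast
    moreover have "h \<inter> V = {}"
    proof (rule ccontr)
      assume "h \<inter> V \<noteq> {}"
      then obtain y C where y: "y \<in> h" "C \<in> \<C>0" "y \<in> C" unfolding V_def by blast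
      then have "y \<in> hc C" using h by blast
      moreover have "hc C \<subseteq> ?T" using hc y fbH'' by blast
      ultimately have "y \<in> X closure_of (hc C)" using closure_of_subset by blast
      then show False using hc y by blast
    qed
    ultimately show False using fbH'' by simp
  qed
  show ?thesis using Kcomp fbJ stJ totJ FJ by blast
qed

end
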